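(* Let $\alpha\in(0,\tfrac12)$. For every sufficiently large $\nu$ (depending on $\alpha$), $$\mathbb P\big(D_{i_{\max},j}=0\ \text{for all } j=0,\dots,n_{i_{\max}}-1\big)=1-o(n^{-1/2})\quad\text{as } n\to\infty.$$
   Context: KPKVB setting: fix $\alpha>0$, $\nu>0$, an integer $n>\nu$, and $R=2\ln(n/\nu)$. $\mathcal D_R$ is the hyperbolic disk (curvature $-1$) of radius $R$ around the origin, with polar coordinates $(r,\theta)$, $r\in[0,R)$, $\theta\in(0,2\pi]$; $f_{\alpha,R}(r,\theta)=\frac{\alpha\sinh(\alpha r)}{2\pi(\cosh(\alpha R)-1)}$. $\mathcal P$ is a Poisson point process on $\mathcal D_R$ with intensity measure $n f_{\alpha,R}(r,\theta)\,dr\,d\theta$. Tiling: $i_{\max}=\lceil 0.9R/(2\ln 2)\rceil$, $n_i=2^{4-i+\lfloor R/(2\ln 2)\rfloor}$ for integers $0\le i\le i_{\max}$; $(i,j)$ is admissible if $0\le i\le i_{\max}$, $0\le j<n_i$; $T_{i,j}=\{(r,\theta)\in\mathcal D_R:\ R-2(i+1)\ln 2\le r<R-2i\ln 2,\ 2\pi j/n_i<\theta\le 2\pi(j+1)/n_i\}$. $N(T_{i,j})=|\mathcal P\cap T_{i,j}|$. Demands: $D_{0,j}=N(T_{0,j})$ if $N(T_{0,j})\in\{1,2\}$ and $D_{0,j}=0$ otherwise; for $0<i\le i_{\max}$, $D_{i,j}=\max\{D_{i-1,2j}+D_{i-1,2j+1}+3-N(T_{i,j}),0\}$. *)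

theory Defs
  imports "HOL-Probability.Probability" "HOL-Library.Landau_Symbols"
begin

definition kpkvb_R :: "real \<Rightarrow> nat \<Rightarrow> real" where
  "kpkvb_R \<nu> n = 2 * ln (real n / \<nu>)"

definition kpkvb_f :: "real \<Rightarrow> real \<Rightarrow> real \<Rightarrow> real \<Rightarrow> real" where
  "kpkvb_f \<alpha> R r \<theta> = \<alpha> * sinh (\<alpha> * r) / (2 * pi * (cosh (\<alpha> * R) - 1))"

definition disk :: "real \<Rightarrow> (real \<times> real) set" where
  "disk R = {(r, \<theta>). 0 \<le> r \<and> r < R \<and> 0 < \<theta> \<and> \<theta> \<le> 2 * pi}"

definition intensity :: "real \<Rightarrow> real \<Rightarrow> nat \<Rightarrow> (real \<times> real) measure" where
  "intensity \<alpha> \<nu> n = density (lborel \<Otimes>\<^sub>M lborel)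
     (\<lambda>(r, \<theta>). ennreal (real n * kpkvb_f \<alpha> (kpkvb_R \<nu> n) r \<theta>
                         * indicator (disk (kpkvb_R \<nu> n)) (r, \<theta>)))"

definition i_max :: "real \<Rightarrow> nat \<Rightarrow> nat" where
  "i_max \<nu> n = nat \<lceil>0.9 * kpkvb_R \<nu> n / (2 * ln 2)\<rceil>"

text \<open>n_i = 2^(4 - i + floor(R/(2 ln 2))) (the exponent is positive whenever i <= i_max and R
  is large; it is truncated at 0 otherwise).\<close>
definition n_tiles :: "real \<Rightarrow> nat \<Rightarrow> nat \<Rightarrow> nat" where
  "n_tiles \<nu> n i = 2 ^ nat (4 - int i + \<lfloor>kpkvb_R \<nu> n / (2 * ln 2)\<rfloor>)"

definition admissible :: "real \<Rightarrow> nat \<Rightarrow> (nat \<times> nat) set" where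
  "admissible \<nu> n = {(i, j). i \<le> i_max \<nu> n \<and> j < n_tiles \<nu> n i}"

definition tile :: "real \<Rightarrow> nat \<Rightarrow> nat \<Rightarrow> nat \<Rightarrow> (real \<times> real) set" where
  "tile \<nu> n i j = {(r, \<theta>) \<in> disk (kpkvb_R \<nu> n).
      kpkvb_R \<nu> n - 2 * (real i + 1) * ln 2 \<le> r \<and> r < kpkvb_R \<nu> n - 2 * real i * ln 2 \<and>
      2 * pi * real j / real (n_tiles \<nu> n i) < \<theta> \<and>
      \<theta> \<le> 2 * pi * (real j + 1) / real (n_tiles \<nu> n i)}"

definition pois :: "real \<Rightarrow> nat pmf" where
  "pois \<mu> = (if 0 < \<mu> then poisson_pmf \<mu> else return_pmf 0)"

text \<open>Joint law of the tile counts N(T_{i,j}), (i,j) admissible, under the Poisson point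
  process with the given intensity: the tiles are pairwise disjoint, so the counts are independent
  Poisson variables with means the intensity measures of the tiles.\<close>
definition tile_counts :: "real \<Rightarrow> real \<Rightarrow> nat \<Rightarrow> (nat \<times> nat \<Rightarrow> nat) pmf" where
  "tile_counts \<alpha> \<nu> n = Pi_pmf (admissible \<nu> n) 0
     (\<lambda>(i, j). pois (enn2real (emeasure (intensity \<alpha> \<nu> n) (tile \<nu> n i j))))"

fun demand :: "(nat \<times> nat \<Rightarrow> nat) \<Rightarrow> nat \<Rightarrow> nat \<Rightarrow> nat" where
  "demand N 0 j = (if N (0, j) \<in> {1, 2} then N (0, j) else 0)"
| "demand N (Suc i) j =
     nat (max (int (demand N i (2 * j)) + int (demand N i (2 * j + 1)) + 3 - int (N (Suc i, j))) 0)"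

definition all_top_demands_zero :: "real \<Rightarrow> nat \<Rightarrow> (nat \<times> nat \<Rightarrow> nat) set" where
  "all_top_demands_zero \<nu> n =
     {N. \<forall>j < n_tiles \<nu> n (i_max \<nu> n). demand N (i_max \<nu> n) j = 0}"

end

theory Submission
  imports Defs "HOL-Real_Asymp.Real_Asymp"
begin


lemma pois_exp_neg:
  assumes "0 < \<mu>"
  shows "(\<integral>\<^sup>+ N. ennreal (exp (- real N)) \<partial>measure_pmf (poisson_pmf \<mu>)) = ennreal (exp (- (1 - exp (-1)) * \<mu>))"
proof -
  have "(\<integral>\<^sup>+ N. ennreal (exp (- real N)) \<partial>measure_pmf (poisson_pmf \<mu>))
      = (\<Sum>k. ennreal (exp (-\<mu>) * ((\<mu> * exp (-1)) ^ k / fact k)))"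
    using assms
    by (simp add: nn_integral_measure_pmf nn_integral_count_space_nat ennreal_mult'[symmetric]
        power_mult_distrib exp_of_nat_mult[symmetric] field_simps flip: exp_minus_inverse)
  also have "\<dots> = ennreal (exp (-\<mu>) * exp (\<mu> * exp (-1)))"
  proof (rule suminf_ennreal_eq)
    show "\<And>i. 0 \<le> exp (-\<mu>) * ((\<mu> * exp (-1)) ^ i / fact i)" using assms by simp
    show "(\<lambda>i. exp (-\<mu>) * ((\<mu> * exp (-1)) ^ i / fact i)) sums (exp (-\<mu>) * exp (\<mu> * exp (-1)))"
      using sums_mult[OF exp_converges[of "\<mu> * exp (-1)"], of "exp (-\<mu>)"]
      by (simp add: divide_inverse mult.commute)
  qed
  also have "exp (-\<mu>) * exp (\<mu> * exp (-1)) = exp (- (1 - exp (-1)) * \<mu>)"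
    by (subst exp_add[symmetric]) (simp add: algebra_simps)
  finally show ?thesis .
qed

lemma nn_integral_indep:
  fixes F G :: "('a \<Rightarrow> 'b) \<Rightarrow> ennreal"
  assumes "finite A" "finite B" "A \<inter> B = {}"
    and F: "\<And>f g. (\<And>x. x \<in> A \<Longrightarrow> f x = g x) \<Longrightarrow> F f = F g"
    and G: "\<And>f g. (\<And>x. x \<in> B \<Longrightarrow> f x = g x) \<Longrightarrow> G f = G g"
  shows "(\<integral>\<^sup>+ f. F f * G f \<partial>measure_pmf (Pi_pmf (A \<union> B) d p))
       = (\<integral>\<^sup>+ f. F f \<partial>measure_pmf (Pi_pmf A d p)) * (\<integral>\<^sup>+ f. G f \<partial>measure_pmf (Pi_pmf B d p))"
proof -
  let ?h = "\<lambda>(f::'a\<Rightarrow>'b, g::'a\<Rightarrow>'b) x. if x \<in> A then f x else g x"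
  have eF: "F (?h (f, g)) = F f" for f g by (rule F) auto
  have eG: "G (?h (f, g)) = G g" for f g
    by (rule G) (use assms(3) in auto)
  have U: "Pi_pmf (A \<union> B) d p = map_pmf ?h (pair_pmf (Pi_pmf A d p) (Pi_pmf B d p))"
    by (rule Pi_pmf_union) (fact assms)+
  have "(\<integral>\<^sup>+ f. F f * G f \<partial>measure_pmf (Pi_pmf (A \<union> B) d p))
     = (\<integral>\<^sup>+ x. F (?h x) * G (?h x) \<partial>measure_pmf (pair_pmf (Pi_pmf A d p) (Pi_pmf B d p)))"
    unfolding U by (rule nn_integral_map_pmf)
  also have "\<dots> = (\<integral>\<^sup>+ f. \<integral>\<^sup>+ g. F (?h (f, g)) * G (?h (f, g)) \<partial>measure_pmf (Pi_pmf B d p) \<partial>measure_pmf (Pi_pmf A d p))"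
    by (rule nn_integral_pair_pmf')
  also have "\<dots> = (\<integral>\<^sup>+ f. \<integral>\<^sup>+ g. F f * G g \<partial>measure_pmf (Pi_pmf B d p) \<partial>measure_pmf (Pi_pmf A d p))"
    by (simp only: eF eG)
  also have "\<dots> = (\<integral>\<^sup>+ f. F f * (\<integral>\<^sup>+ g. G g \<partial>measure_pmf (Pi_pmf B d p)) \<partial>measure_pmf (Pi_pmf A d p))"
    by (simp add: nn_integral_cmult)
  also have "\<dots> = (\<integral>\<^sup>+ f. F f \<partial>measure_pmf (Pi_pmf A d p)) * (\<integral>\<^sup>+ f. G f \<partial>measure_pmf (Pi_pmf B d p))"
    by (simp add: nn_integral_multc)
  finally show ?thesis .
qed

lemma nn_integral_Pi_single:
  "(\<integral>\<^sup>+ f. H (f x) \<partial>measure_pmf (Pi_pmf {x} d p)) = (\<integral>\<^sup>+ y. H y \<partial>measure_pmf (p x))"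
  by (simp add: Pi_pmf_singleton)

fun sub :: "nat \<Rightarrow> nat \<Rightarrow> (nat \<times> nat) set" where
  "sub 0 j = {(0, j)}"
| "sub (Suc i) j = insert (Suc i, j) (sub i (2 * j) \<union> sub i (2 * j + 1))"

lemma finite_sub[simp]: "finite (sub i j)"
  by (induction i arbitrary: j) auto

lemma sub_mem: "(k, l) \<in> sub i j \<Longrightarrow> k \<le> i \<and> l div 2 ^ (i - k) = j"
proof (induction i arbitrary: j)
  case 0 then show ?case by simp
next
  case (Suc i)
  show ?case
  proof (cases "(k, l) = (Suc i, j)")
    case True then show ?thesis by simp
  next
    case False
    then obtain j' where j': "j' = 2 * j \<or> j' = 2 * j + 1" "(k, l) \<in> sub i j'" using Suc.prems by auto
    from Suc.IH[OF j'(2)] have "k \<le> i" "l div 2 ^ (i - k) = j'" by auto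
    then have "Suc i - k = Suc (i - k)" by simp
    then have "l div 2 ^ (Suc i - k) = l div (2 ^ (i - k) * 2)" by (simp add: mult.commute)
    also have "\<dots> = (l div 2 ^ (i - k)) div 2" by (rule div_mult2_eq)
    finally have "l div 2 ^ (Suc i - k) = (l div 2 ^ (i - k)) div 2" .
    with \<open>l div 2 ^ (i - k) = j'\<close> have "l div 2 ^ (Suc i - k) = j' div 2" by simp
    moreover have "j' div 2 = j" using j'(1) by auto
    ultimately show ?thesis using \<open>k \<le> i\<close> by simp
  qed
qed

lemma sub_disj: "sub i (2 * j) \<inter> sub i (2 * j + 1) = {}"
proof (rule ccontr)
  assume "sub i (2 * j) \<inter> sub i (2 * j + 1) \<noteq> {}"
  then obtain k l where "(k, l) \<in> sub i (2 * j)" "(k, l) \<in> sub i (2 * j + 1)" by auto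
  from sub_mem[OF this(1)] sub_mem[OF this(2)] have "2 * j = 2 * j + 1" by simp
  then show False by simp
qed

lemma sub_top_notin: "(Suc i, j) \<notin> sub i j'"
  using sub_mem[of "Suc i" j i j'] by auto

lemma demand_cong: "(\<And>x. x \<in> sub i j \<Longrightarrow> N x = N' x) \<Longrightarrow> demand N i j = demand N' i j"
proof (induction i arbitrary: j)
  case 0 then show ?case by simp
next
  case (Suc i)
  have "demand N i (2*j) = demand N' i (2*j)" by (rule Suc.IH) (use Suc.prems in auto)
  moreover have "demand N i (2*j+1) = demand N' i (2*j+1)" by (rule Suc.IH) (use Suc.prems in auto)
  moreover have "N (Suc i, j) = N' (Suc i, j)" using Suc.prems by auto
  ultimately show ?case by simp
qed


lemma ennreal_mult3:
  fixes A B C :: real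
  assumes "0 \<le> A" "0 \<le> B" "0 \<le> C"
  shows "ennreal (A * (B * C)) = ennreal A * (ennreal B * ennreal C)"
  using assms by (simp add: ennreal_mult)

definition X :: "(nat \<times> nat \<Rightarrow> nat) \<Rightarrow> nat \<Rightarrow> nat \<Rightarrow> real" where
  "X N i j = real (demand N i (2*j)) + real (demand N i (2*j+1)) + 3 - real (N (Suc i, j))"

lemma step_int:
  "(\<integral>\<^sup>+ N. ennreal (exp (X N i j)) \<partial>measure_pmf (Pi_pmf (sub (Suc i) j) d p))
   = (\<integral>\<^sup>+ y. ennreal (exp 3 * exp (- real y)) \<partial>measure_pmf (p (Suc i, j))) *
     ((\<integral>\<^sup>+ N. ennreal (exp (real (demand N i (2*j)))) \<partial>measure_pmf (Pi_pmf (sub i (2*j)) d p)) *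
      (\<integral>\<^sup>+ N. ennreal (exp (real (demand N i (2*j+1)))) \<partial>measure_pmf (Pi_pmf (sub i (2*j+1)) d p)))"
proof -
  let ?A = "sub i (2*j)" and ?B = "sub i (2*j+1)"
  have S: "sub (Suc i) j = {(Suc i, j)} \<union> (?A \<union> ?B)" by simp
  have disj: "{(Suc i, j)} \<inter> (?A \<union> ?B) = {}" using sub_top_notin by auto
  have eq: "ennreal (exp (X N i j)) = ennreal (exp 3 * exp (- real (N (Suc i, j)))) *
        (ennreal (exp (real (demand N i (2*j)))) * ennreal (exp (real (demand N i (2*j+1)))))" for N
  proof -
    have r: "exp (a + b + 3 - c) = exp 3 * exp (- c) * (exp a * exp b)" for a b c :: real
      by (simp add: exp_diff exp_add exp_minus field_simps)
    show ?thesis unfolding X_def r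
      by (rule ennreal_mult3) auto
  qed
  have "(\<integral>\<^sup>+ N. ennreal (exp (X N i j)) \<partial>measure_pmf (Pi_pmf (sub (Suc i) j) d p))
     = (\<integral>\<^sup>+ N. ennreal (exp 3 * exp (- real (N (Suc i, j)))) *
        (ennreal (exp (real (demand N i (2*j)))) * ennreal (exp (real (demand N i (2*j+1)))))
        \<partial>measure_pmf (Pi_pmf ({(Suc i, j)} \<union> (?A \<union> ?B)) d p))"
    by (simp only: eq S)
  also have "\<dots> = (\<integral>\<^sup>+ N. ennreal (exp 3 * exp (- real (N (Suc i, j)))) \<partial>measure_pmf (Pi_pmf {(Suc i, j)} d p)) *
     (\<integral>\<^sup>+ N. ennreal (exp (real (demand N i (2*j)))) * ennreal (exp (real (demand N i (2*j+1))))
        \<partial>measure_pmf (Pi_pmf (?A \<union> ?B) d p))"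
  proof (rule nn_integral_indep[where F="\<lambda>N. ennreal (exp 3 * exp (- real (N (Suc i, j))))"
        and G="\<lambda>N. ennreal (exp (real (demand N i (2*j)))) * ennreal (exp (real (demand N i (2*j+1))))"])
    show "ennreal (exp (real (demand f i (2 * j)))) * ennreal (exp (real (demand f i (2 * j + 1)))) =
          ennreal (exp (real (demand g i (2 * j)))) * ennreal (exp (real (demand g i (2 * j + 1))))"
      if "\<And>x. x \<in> ?A \<union> ?B \<Longrightarrow> f x = g x" for f g :: "nat \<times> nat \<Rightarrow> nat"
    proof -
      have "demand f i (2*j) = demand g i (2*j)" by (rule demand_cong) (use that in auto)
      moreover have "demand f i (2*j+1) = demand g i (2*j+1)" by (rule demand_cong) (use that in auto)
      ultimately show ?thesis by simp
    qed
  qed (use disj in simp_all)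
  also have "(\<integral>\<^sup>+ N. ennreal (exp (real (demand N i (2*j)))) * ennreal (exp (real (demand N i (2*j+1))))
        \<partial>measure_pmf (Pi_pmf (?A \<union> ?B) d p))
     = (\<integral>\<^sup>+ N. ennreal (exp (real (demand N i (2*j)))) \<partial>measure_pmf (Pi_pmf ?A d p)) *
       (\<integral>\<^sup>+ N. ennreal (exp (real (demand N i (2*j+1)))) \<partial>measure_pmf (Pi_pmf ?B d p))"
  proof (rule nn_integral_indep[OF _ _ sub_disj, where F="\<lambda>N. ennreal (exp (real (demand N i (2*j))))"
        and G="\<lambda>N. ennreal (exp (real (demand N i (2*j+1))))"])
    show "ennreal (exp (real (demand f i (2 * j)))) = ennreal (exp (real (demand g i (2 * j))))"
      if "\<And>x. x \<in> ?A \<Longrightarrow> f x = g x" for f g :: "nat \<times> nat \<Rightarrow> nat"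
      using demand_cong[of i "2*j" f g] that by simp
    show "ennreal (exp (real (demand f i (2 * j + 1)))) = ennreal (exp (real (demand g i (2 * j + 1))))"
      if "\<And>x. x \<in> ?B \<Longrightarrow> f x = g x" for f g :: "nat \<times> nat \<Rightarrow> nat"
      using demand_cong[of i "2*j+1" f g] that by simp
  qed simp_all
  finally have fin: "(\<integral>\<^sup>+ N. ennreal (exp (X N i j)) \<partial>measure_pmf (Pi_pmf (sub (Suc i) j) d p))
     = (\<integral>\<^sup>+ N. ennreal (exp 3 * exp (- real (N (Suc i, j)))) \<partial>measure_pmf (Pi_pmf {(Suc i, j)} d p)) *
       ((\<integral>\<^sup>+ N. ennreal (exp (real (demand N i (2*j)))) \<partial>measure_pmf (Pi_pmf ?A d p)) *
       (\<integral>\<^sup>+ N. ennreal (exp (real (demand N i (2*j+1)))) \<partial>measure_pmf (Pi_pmf ?B d p)))" .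
  have single: "(\<integral>\<^sup>+ N. ennreal (exp 3 * exp (- real (N (Suc i, j)))) \<partial>measure_pmf (Pi_pmf {(Suc i, j)} d p))
     = (\<integral>\<^sup>+ y. ennreal (exp 3 * exp (- real y)) \<partial>measure_pmf (p (Suc i, j)))"
    by (rule nn_integral_Pi_single)
  show ?thesis using fin unfolding single .
qed

lemma step_bound:
  assumes A: "(\<integral>\<^sup>+ N. ennreal (exp (real (demand N i (2*j)))) \<partial>measure_pmf (Pi_pmf (sub i (2*j)) d p)) \<le> 2"
    and B: "(\<integral>\<^sup>+ N. ennreal (exp (real (demand N i (2*j+1)))) \<partial>measure_pmf (Pi_pmf (sub i (2*j+1)) d p)) \<le> 2"
    and q: "(\<integral>\<^sup>+ y. ennreal (exp (- real y)) \<partial>measure_pmf (p (Suc i, j))) \<le> ennreal q"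
    and q0: "0 \<le> q"
  shows "(\<integral>\<^sup>+ N. ennreal (exp (X N i j)) \<partial>measure_pmf (Pi_pmf (sub (Suc i) j) d p)) \<le> ennreal (4 * exp 3 * q)"
proof -
  have "(\<integral>\<^sup>+ y. ennreal (exp 3 * exp (- real y)) \<partial>measure_pmf (p (Suc i, j)))
      = ennreal (exp 3) * (\<integral>\<^sup>+ y. ennreal (exp (- real y)) \<partial>measure_pmf (p (Suc i, j)))"
    by (simp add: ennreal_mult nn_integral_cmult)
  also have "\<dots> \<le> ennreal (exp 3) * ennreal q" using q by (intro mult_left_mono) auto
  finally have 1: "(\<integral>\<^sup>+ y. ennreal (exp 3 * exp (- real y)) \<partial>measure_pmf (p (Suc i, j))) \<le> ennreal (exp 3) * ennreal q" .
  have "(\<integral>\<^sup>+ N. ennreal (exp (X N i j)) \<partial>measure_pmf (Pi_pmf (sub (Suc i) j) d p))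
     \<le> (ennreal (exp 3) * ennreal q) * (2 * 2)"
    unfolding step_int by (intro mult_mono 1 A B) auto
  also have "\<dots> = ennreal (4 * exp 3 * q)"
  proof -
    have e1: "ennreal (4 * exp 3 * q) = ennreal 4 * (ennreal (exp 3) * ennreal q)"
      using q0 by (simp add: ennreal_mult mult.assoc)
    show ?thesis unfolding e1 by (simp add: mult_ac)
  qed
  finally show ?thesis .
qed


lemma real_demand_Suc: "real (demand N (Suc i) j) = max (X N i j) 0"
  by (simp add: X_def)

lemma exp2_ge4: "4 \<le> exp (2::real)"
proof -
  have "2 \<le> exp (1::real)" using exp_ge_add_one_self[of 1] by simp
  then have "2 * 2 \<le> exp (1::real) * exp 1" by (intro mult_mono) auto
  then show ?thesis by (simp add: exp_add[symmetric])
qed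

lemma nn_integral_pmf_one_plus:
  fixes f :: "'a \<Rightarrow> real"
  assumes "\<And>x. 0 \<le> f x"
  shows "(\<integral>\<^sup>+ x. ennreal (1 + f x) \<partial>measure_pmf M) = 1 + (\<integral>\<^sup>+ x. ennreal (f x) \<partial>measure_pmf M)"
proof -
  have "(\<integral>\<^sup>+ x. ennreal (1 + f x) \<partial>measure_pmf M) = (\<integral>\<^sup>+ x. 1 + ennreal (f x) \<partial>measure_pmf M)"
    using assms by (simp add: ennreal_plus)
  also have "\<dots> = (\<integral>\<^sup>+ x. 1 \<partial>measure_pmf M) + (\<integral>\<^sup>+ x. ennreal (f x) \<partial>measure_pmf M)"
    by (rule nn_integral_add) auto
  also have "(\<integral>\<^sup>+ x. 1 \<partial>measure_pmf M) = 1"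
    by (simp add: measure_pmf.emeasure_space_1)
  finally show ?thesis .
qed

lemma demand_mgf:
  assumes "\<forall>x\<in>sub i j. (\<integral>\<^sup>+ y. ennreal (exp (- real y)) \<partial>measure_pmf (p x)) \<le> ennreal q"
    and q0: "0 \<le> q" and q5: "q \<le> exp (-5)"
  shows "(\<integral>\<^sup>+ N. ennreal (exp (real (demand N i j))) \<partial>measure_pmf (Pi_pmf (sub i j) d p)) \<le> 2"
  using assms(1)
proof (induction i arbitrary: j)
  case 0
  let ?H = "\<lambda>y::nat. ennreal (exp (real (if y \<in> {1, 2} then y else 0)))"
  have "(\<integral>\<^sup>+ N. ennreal (exp (real (demand N 0 j))) \<partial>measure_pmf (Pi_pmf (sub 0 j) d p))
      = (\<integral>\<^sup>+ N. ?H (N (0, j)) \<partial>measure_pmf (Pi_pmf {(0, j)} d p))" by simp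
  also have "\<dots> = (\<integral>\<^sup>+ y. ?H y \<partial>measure_pmf (p (0, j)))" by (rule nn_integral_Pi_single)
  also have "\<dots> \<le> (\<integral>\<^sup>+ y. ennreal (1 + exp 4 * exp (- real y)) \<partial>measure_pmf (p (0, j)))"
  proof (rule nn_integral_mono)
    fix y :: nat
    have "exp (real (if y \<in> {1, 2} then y else 0)) \<le> 1 + exp 4 * exp (- real y)"
    proof (cases "y \<in> {1, 2}")
      case True
      then have "real y \<le> 2" by auto
      then have "exp (real y) \<le> exp 4 * exp (- real y)"
        by (simp add: exp_add[symmetric])
      then show ?thesis using True by simp
    next
      case False then show ?thesis by simp
    qed
    then show "?H y \<le> ennreal (1 + exp 4 * exp (- real y))" by (rule ennreal_leI)
  qed
  also have "\<dots> = 1 + ennreal (exp 4) * (\<integral>\<^sup>+ y. ennreal (exp (- real y)) \<partial>measure_pmf (p (0, j)))"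
    by (subst nn_integral_pmf_one_plus) (auto simp: ennreal_mult nn_integral_cmult)
  also have "\<dots> \<le> 1 + ennreal (exp 4) * ennreal q"
    using "0.prems" by (intro add_left_mono mult_left_mono) auto
  also have "\<dots> = ennreal (1 + exp 4 * q)" using q0 by (simp add: ennreal_mult ennreal_plus)
  also have "\<dots> \<le> ennreal 2"
  proof (rule ennreal_leI)
    have "exp 4 * q \<le> exp 4 * exp (-5)" using q5 by (intro mult_left_mono) auto
    also have "\<dots> = exp (-1)" by (simp add: exp_add[symmetric])
    also have "\<dots> \<le> 1" by simp
    finally show "1 + exp 4 * q \<le> 2" by simp
  qed
  finally show ?case by simp
next
  case (Suc i)
  have IA: "(\<integral>\<^sup>+ N. ennreal (exp (real (demand N i (2*j)))) \<partial>measure_pmf (Pi_pmf (sub i (2*j)) d p)) \<le> 2"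
    by (rule Suc.IH) (use Suc.prems in auto)
  have IB: "(\<integral>\<^sup>+ N. ennreal (exp (real (demand N i (2*j+1)))) \<partial>measure_pmf (Pi_pmf (sub i (2*j+1)) d p)) \<le> 2"
    by (rule Suc.IH) (use Suc.prems in auto)
  have qx: "(\<integral>\<^sup>+ y. ennreal (exp (- real y)) \<partial>measure_pmf (p (Suc i, j))) \<le> ennreal q"
    using Suc.prems by auto
  have "(\<integral>\<^sup>+ N. ennreal (exp (real (demand N (Suc i) j))) \<partial>measure_pmf (Pi_pmf (sub (Suc i) j) d p))
      \<le> (\<integral>\<^sup>+ N. ennreal (1 + exp (X N i j)) \<partial>measure_pmf (Pi_pmf (sub (Suc i) j) d p))"
  proof (rule nn_integral_mono)
    fix N
    have "exp (max (X N i j) 0) \<le> 1 + exp (X N i j)" by (cases "X N i j \<le> 0") (auto simp: max_def)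
    then show "ennreal (exp (real (demand N (Suc i) j))) \<le> ennreal (1 + exp (X N i j))"
      unfolding real_demand_Suc by (rule ennreal_leI)
  qed
  also have "\<dots> = 1 + (\<integral>\<^sup>+ N. ennreal (exp (X N i j)) \<partial>measure_pmf (Pi_pmf (sub (Suc i) j) d p))"
    by (rule nn_integral_pmf_one_plus) simp
  also have "\<dots> \<le> 1 + ennreal (4 * exp 3 * q)"
    by (intro add_left_mono step_bound IA IB qx q0)
  also have "\<dots> = ennreal (1 + 4 * exp 3 * q)" using q0 by (simp add: ennreal_plus)
  also have "\<dots> \<le> ennreal 2"
  proof (rule ennreal_leI)
    have "4 * exp 3 * q \<le> 4 * exp 3 * exp (-5)" using q5 by (intro mult_left_mono) auto
    also have "\<dots> = 4 / exp 2" by (simp add: exp_add[symmetric] exp_minus field_simps)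
    also have "\<dots> \<le> 1" using exp2_ge4 by simp
    finally show "1 + 4 * exp 3 * q \<le> 2" by simp
  qed
  finally show ?case by simp
qed

lemma top_prob:
  assumes A: "(\<integral>\<^sup>+ N. ennreal (exp (real (demand N i (2*j)))) \<partial>measure_pmf (Pi_pmf (sub i (2*j)) d p)) \<le> 2"
    and B: "(\<integral>\<^sup>+ N. ennreal (exp (real (demand N i (2*j+1)))) \<partial>measure_pmf (Pi_pmf (sub i (2*j+1)) d p)) \<le> 2"
    and q: "(\<integral>\<^sup>+ y. ennreal (exp (- real y)) \<partial>measure_pmf (p (Suc i, j))) \<le> ennreal q"
    and q0: "0 \<le> q"
  shows "measure_pmf.prob (Pi_pmf (sub (Suc i) j) d p) {N. demand N (Suc i) j \<noteq> 0} \<le> 4 * exp 2 * q"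
proof -
  let ?M = "measure_pmf (Pi_pmf (sub (Suc i) j) d p)"
  have "ennreal (measure_pmf.prob (Pi_pmf (sub (Suc i) j) d p) {N. demand N (Suc i) j \<noteq> 0})
      = emeasure ?M {N. demand N (Suc i) j \<noteq> 0}"
    by (simp add: measure_pmf.emeasure_eq_measure)
  also have "\<dots> = (\<integral>\<^sup>+ N. indicator {N. demand N (Suc i) j \<noteq> 0} N \<partial>?M)"
    by (simp add: nn_integral_indicator)
  also have "\<dots> \<le> (\<integral>\<^sup>+ N. ennreal (exp (-1)) * ennreal (exp (X N i j)) \<partial>?M)"
  proof (rule nn_integral_mono)
    fix N
    show "indicator {N. demand N (Suc i) j \<noteq> 0} N \<le> ennreal (exp (-1)) * ennreal (exp (X N i j))"
    proof (cases "demand N (Suc i) j = 0")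
      case True then show ?thesis by simp
    next
      case False
      then have "1 \<le> real (demand N (Suc i) j)" by simp
      then have "1 \<le> X N i j" unfolding real_demand_Suc by simp
      then have "1 \<le> exp (-1) * exp (X N i j)" by (simp add: exp_add[symmetric])
      then have "ennreal 1 \<le> ennreal (exp (-1) * exp (X N i j))" by (rule ennreal_leI)
      then show ?thesis using False by (simp add: ennreal_mult)
    qed
  qed
  also have "\<dots> = ennreal (exp (-1)) * (\<integral>\<^sup>+ N. ennreal (exp (X N i j)) \<partial>?M)"
    by (simp add: nn_integral_cmult)
  also have "\<dots> \<le> ennreal (exp (-1)) * ennreal (4 * exp 3 * q)"
    by (intro mult_left_mono step_bound A B q q0) simp
  also have "\<dots> = ennreal (4 * exp 2 * q)"
    using q0 by (simp add: ennreal_mult[symmetric] exp_add[symmetric] mult_ac)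
  finally show ?thesis using q0 by (simp add: ennreal_le_iff)
qed


lemma prob_sub:
  assumes "finite A" "sub i j \<subseteq> A"
  shows "measure_pmf.prob (Pi_pmf A d p) {N. demand N i j \<noteq> 0}
       = measure_pmf.prob (Pi_pmf (sub i j) d p) {N. demand N i j \<noteq> 0}"
proof -
  let ?r = "\<lambda>f x. if x \<in> sub i j then f x else d"
  have "Pi_pmf (sub i j) d p = map_pmf ?r (Pi_pmf A d p)"
    by (rule Pi_pmf_subset) (fact assms)+
  then have "measure_pmf.prob (Pi_pmf (sub i j) d p) {N. demand N i j \<noteq> 0}
      = measure_pmf.prob (Pi_pmf A d p) (?r -` {N. demand N i j \<noteq> 0})"
    by simp
  also have "?r -` {N. demand N i j \<noteq> 0} = {N. demand N i j \<noteq> 0}"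
  proof -
    have "demand (?r N) i j = demand N i j" for N by (rule demand_cong) simp
    then show ?thesis by auto
  qed
  finally show ?thesis by simp
qed


lemma pois_exp_neg':
  assumes "0 < \<mu>"
  shows "(\<integral>\<^sup>+ N. ennreal (exp (- real N)) \<partial>measure_pmf (pois \<mu>)) = ennreal (exp (- (1 - exp (-1)) * \<mu>))"
  using assms by (simp add: pois_def pois_exp_neg)

lemma pois_bound:
  assumes "0 < \<mu>" "M \<le> \<mu>"
  shows "(\<integral>\<^sup>+ N. ennreal (exp (- real N)) \<partial>measure_pmf (pois \<mu>)) \<le> ennreal (exp (- (1 - exp (-1)) * M))"
proof -
  have "(1 - exp (-1)) * M \<le> (1 - exp (-1)) * \<mu>" by (intro mult_left_mono assms(2)) simp
  then show ?thesis unfolding pois_exp_neg'[OF assms(1)] by (intro ennreal_leI) simp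
qed

lemma assemble:
  fixes \<mu> :: "nat \<times> nat \<Rightarrow> real" and A :: "(nat \<times> nat) set"
  assumes fin: "finite A" and subA: "\<And>j. j < T \<Longrightarrow> sub (Suc m) j \<subseteq> A"
    and pos: "\<And>x. x \<in> A \<Longrightarrow> 0 < \<mu> x"
    and big: "\<And>x. x \<in> A \<Longrightarrow> 5 \<le> (1 - exp (-1)) * \<mu> x"
    and top: "\<And>j. j < T \<Longrightarrow> Mt \<le> \<mu> (Suc m, j)"
  shows "1 - measure_pmf.prob (Pi_pmf A 0 (\<lambda>x. pois (\<mu> x))) {N. \<forall>j<T. demand N (Suc m) j = 0}
         \<le> real T * (4 * exp 2 * exp (- (1 - exp (-1)) * Mt))"
proof -
  let ?P = "Pi_pmf A 0 (\<lambda>x. pois (\<mu> x))"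
  let ?p = "\<lambda>x. pois (\<mu> x)"
  let ?E = "\<lambda>j. {N. demand N (Suc m) j \<noteq> 0}"
  have c0: "0 < 1 - exp (-1::real)" by simp
  have qb: "(\<integral>\<^sup>+ y. ennreal (exp (- real y)) \<partial>measure_pmf (?p x)) \<le> ennreal (exp (-5))" if "x \<in> A" for x
  proof -
    have "(\<integral>\<^sup>+ y. ennreal (exp (- real y)) \<partial>measure_pmf (?p x)) = ennreal (exp (- (1 - exp (-1)) * \<mu> x))"
      using pos[OF that] by (rule pois_exp_neg')
    also have "\<dots> \<le> ennreal (exp (-5))" using big[OF that] by (intro ennreal_leI) (simp add: algebra_simps)
    finally show ?thesis .
  qed
  have each: "measure_pmf.prob ?P (?E j) \<le> 4 * exp 2 * exp (- (1 - exp (-1)) * Mt)" if j: "j < T" for j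
  proof -
    have S: "sub (Suc m) j \<subseteq> A" using subA[OF j] .
    have "measure_pmf.prob ?P (?E j) = measure_pmf.prob (Pi_pmf (sub (Suc m) j) 0 ?p) (?E j)"
      by (rule prob_sub[OF fin S])
    also have "\<dots> \<le> 4 * exp 2 * exp (- (1 - exp (-1)) * Mt)"
    proof (rule top_prob)
      show "(\<integral>\<^sup>+ N. ennreal (exp (real (demand N m (2*j)))) \<partial>measure_pmf (Pi_pmf (sub m (2*j)) 0 ?p)) \<le> 2"
        by (rule demand_mgf[where q="exp (-5)"]) (use S qb in auto)
      show "(\<integral>\<^sup>+ N. ennreal (exp (real (demand N m (2*j+1)))) \<partial>measure_pmf (Pi_pmf (sub m (2*j+1)) 0 ?p)) \<le> 2"
        by (rule demand_mgf[where q="exp (-5)"]) (use S qb in auto)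
      have xA: "(Suc m, j) \<in> A" using S by auto
      show "(\<integral>\<^sup>+ y. ennreal (exp (- real y)) \<partial>measure_pmf (?p (Suc m, j))) \<le> ennreal (exp (- (1 - exp (-1)) * Mt))"
        by (rule pois_bound[OF pos[OF xA] top[OF j]])
    qed simp
    finally show ?thesis .
  qed
  have "{N. \<forall>j<T. demand N (Suc m) j = 0} = UNIV - (\<Union>j\<in>{..<T}. ?E j)" by auto
  then have "1 - measure_pmf.prob ?P {N. \<forall>j<T. demand N (Suc m) j = 0}
        = measure_pmf.prob ?P (\<Union>j\<in>{..<T}. ?E j)"
    using measure_pmf.prob_compl[of "\<Union>j\<in>{..<T}. ?E j" ?P] by simp
  also have "\<dots> \<le> (\<Sum>j\<in>{..<T}. measure_pmf.prob ?P (?E j))"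
    by (rule measure_pmf.finite_measure_subadditive_finite) auto
  also have "\<dots> \<le> (\<Sum>j\<in>{..<T}. 4 * exp 2 * exp (- (1 - exp (-1)) * Mt))"
    by (intro sum_mono each) simp
  also have "\<dots> = real T * (4 * exp 2 * exp (- (1 - exp (-1)) * Mt))" by simp
  finally show ?thesis .
qed


lemma box_sets: "{a..<b} \<times> {t1<..t2} \<in> sets (lborel \<Otimes>\<^sub>M lborel :: (real \<times> real) measure)"
  by (rule pair_measureI) auto

lemma box_emeasure: "a \<le> b \<Longrightarrow> t1 \<le> t2 \<Longrightarrow>
  emeasure (lborel \<Otimes>\<^sub>M lborel) ({a..<b} \<times> {t1<..t2::real}) = ennreal ((b - a) * (t2 - t1))"
  by (simp add: lborel.emeasure_pair_measure_Times ennreal_mult)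

lemma intensity_box:
  fixes \<alpha> \<nu> :: real and n :: nat
  assumes "0 < \<alpha>" "0 \<le> a" "a < b" "b \<le> kpkvb_R \<nu> n" "0 \<le> t1" "t1 < t2" "t2 \<le> 2*pi"
  shows "ennreal (real n * \<alpha> * sinh (\<alpha>*a) / (2*pi*(cosh (\<alpha>*kpkvb_R \<nu> n) - 1)) * ((b-a)*(t2-t1)))
           \<le> emeasure (intensity \<alpha> \<nu> n) ({a..<b} \<times> {t1<..t2})"
    and "emeasure (intensity \<alpha> \<nu> n) ({a..<b} \<times> {t1<..t2})
           \<le> ennreal (real n * \<alpha> * sinh (\<alpha>*kpkvb_R \<nu> n) / (2*pi*(cosh (\<alpha>*kpkvb_R \<nu> n) - 1)) * ((b-a)*(t2-t1)))"
proof -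
  define R where "R = kpkvb_R \<nu> n"
  define S where "S = {a..<b} \<times> {t1<..t2::real}"
  define g where "g = (\<lambda>(r, \<theta>). ennreal (real n * kpkvb_f \<alpha> R r \<theta> * indicator (disk R) (r, \<theta>)))"
  define D where "D = 2*pi*(cosh (\<alpha>*R) - 1)"
  have R0: "0 < R" using assms unfolding R_def by linarith
  have D0: "0 < D" unfolding D_def using cosh_real_nonneg_less_iff[of 0 "\<alpha>*R"] assms(1) R0 by simp
  have SD: "S \<subseteq> disk R" unfolding S_def disk_def using assms R_def by auto
  have diskeq: "disk R = {0..<R} \<times> {0<..2*pi}" by (auto simp: disk_def)
  have disk_sets[measurable]: "disk R \<in> sets (lborel \<Otimes>\<^sub>M lborel)"
    unfolding diskeq by (rule box_sets)
  have sm[measurable]: "(\<lambda>r::real. sinh (\<alpha>*r)) \<in> borel_measurable borel"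
    by (intro borel_measurable_continuous_onI continuous_intros)
  define C where "C = real n * \<alpha> / (2 * pi * (cosh (\<alpha> * R) - 1))"
  have gg: "g = (\<lambda>x. ennreal (C * sinh (\<alpha> * fst x) * indicator (disk R) x))"
    unfolding g_def kpkvb_f_def C_def by (auto simp: fun_eq_iff mult.assoc)
  have gm: "g \<in> borel_measurable (lborel \<Otimes>\<^sub>M lborel)"
    unfolding gg by measurable
  have E: "emeasure (intensity \<alpha> \<nu> n) S = (\<integral>\<^sup>+ x. g x * indicator S x \<partial>(lborel \<Otimes>\<^sub>M lborel))"
    unfolding intensity_def g_def R_def S_def
    by (rule emeasure_density) (use gm[unfolded g_def R_def] in \<open>auto simp: box_sets[unfolded S_def]\<close>)
  have gS: "g (r, \<theta>) = ennreal (real n * \<alpha> * sinh (\<alpha>*r) / D)" if "(r, \<theta>) \<in> S" for r \<theta>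
    using that SD unfolding g_def kpkvb_f_def D_def by (auto simp: indicator_def mult.assoc)
  have area: "emeasure (lborel \<Otimes>\<^sub>M lborel) S = ennreal ((b - a) * (t2 - t1))"
    unfolding S_def using assms by (intro box_emeasure) auto
  let ?cl = "real n * \<alpha> * sinh (\<alpha>*a) / D"
  let ?cu = "real n * \<alpha> * sinh (\<alpha>*R) / D"
  have "(\<integral>\<^sup>+ x. ennreal ?cl * indicator S x \<partial>(lborel \<Otimes>\<^sub>M lborel)) \<le> (\<integral>\<^sup>+ x. g x * indicator S x \<partial>(lborel \<Otimes>\<^sub>M lborel))"
  proof (rule nn_integral_mono)
    fix x :: "real \<times> real"
    show "ennreal ?cl * indicator S x \<le> g x * indicator S x"
    proof (cases "x \<in> S")
      case True
      obtain r \<theta> where x: "x = (r, \<theta>)" by (cases x)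
      have "a \<le> r" using True x unfolding S_def by auto
      then have "sinh (\<alpha>*a) \<le> sinh (\<alpha>*r)" using assms(1) by (simp add: mult_left_mono)
      then have "?cl \<le> real n * \<alpha> * sinh (\<alpha>*r) / D"
        using D0 assms(1) by (intro divide_right_mono mult_left_mono) auto
      then show ?thesis using True x gS[of r \<theta>] by (simp add: ennreal_leI)
    qed simp
  qed
  moreover have "(\<integral>\<^sup>+ x. ennreal ?cl * indicator S x \<partial>(lborel \<Otimes>\<^sub>M lborel)) = ennreal ?cl * ennreal ((b - a) * (t2 - t1))"
    by (simp add: nn_integral_cmult_indicator S_def box_sets area[unfolded S_def])
  moreover have "ennreal ?cl * ennreal ((b - a) * (t2 - t1)) = ennreal (?cl * ((b - a) * (t2 - t1)))"
    using assms D0 by (intro ennreal_mult[symmetric]) auto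
  ultimately show "ennreal (real n * \<alpha> * sinh (\<alpha>*a) / (2*pi*(cosh (\<alpha>*kpkvb_R \<nu> n) - 1)) * ((b-a)*(t2-t1)))
           \<le> emeasure (intensity \<alpha> \<nu> n) ({a..<b} \<times> {t1<..t2})"
    using E unfolding D_def R_def S_def by simp
  have "(\<integral>\<^sup>+ x. g x * indicator S x \<partial>(lborel \<Otimes>\<^sub>M lborel)) \<le> (\<integral>\<^sup>+ x. ennreal ?cu * indicator S x \<partial>(lborel \<Otimes>\<^sub>M lborel))"
  proof (rule nn_integral_mono)
    fix x :: "real \<times> real"
    show "g x * indicator S x \<le> ennreal ?cu * indicator S x"
    proof (cases "x \<in> S")
      case True
      obtain r \<theta> where x: "x = (r, \<theta>)" by (cases x)
      have "r \<le> R" using True x assms unfolding S_def R_def by auto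
      then have "sinh (\<alpha>*r) \<le> sinh (\<alpha>*R)" using assms(1) by (simp add: mult_left_mono)
      then have "real n * \<alpha> * sinh (\<alpha>*r) / D \<le> ?cu"
        using D0 assms(1) by (intro divide_right_mono mult_left_mono) auto
      then show ?thesis using True x gS[of r \<theta>] by (simp add: ennreal_leI)
    qed simp
  qed
  moreover have "(\<integral>\<^sup>+ x. ennreal ?cu * indicator S x \<partial>(lborel \<Otimes>\<^sub>M lborel)) = ennreal ?cu * ennreal ((b - a) * (t2 - t1))"
    by (simp add: nn_integral_cmult_indicator S_def box_sets area[unfolded S_def])
  moreover have "ennreal ?cu * ennreal ((b - a) * (t2 - t1)) = ennreal (?cu * ((b - a) * (t2 - t1)))"
    using assms D0 R0 by (intro ennreal_mult[symmetric]) auto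
  ultimately show "emeasure (intensity \<alpha> \<nu> n) ({a..<b} \<times> {t1<..t2})
           \<le> ennreal (real n * \<alpha> * sinh (\<alpha>*kpkvb_R \<nu> n) / (2*pi*(cosh (\<alpha>*kpkvb_R \<nu> n) - 1)) * ((b-a)*(t2-t1)))"
    using E unfolding D_def R_def S_def by simp
qed


lemma imax_bounds:
  assumes "0 \<le> kpkvb_R \<nu> n"
  shows "0.9 * kpkvb_R \<nu> n / (2 * ln 2) \<le> real (i_max \<nu> n)"
    and "real (i_max \<nu> n) < 0.9 * kpkvb_R \<nu> n / (2 * ln 2) + 1"
proof -
  let ?x = "0.9 * kpkvb_R \<nu> n / (2 * ln 2)"
  have x0: "0 \<le> ?x" using assms by simp
  then have c0: "0 \<le> \<lceil>?x\<rceil>" by simp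
  have e: "real (i_max \<nu> n) = real_of_int \<lceil>?x\<rceil>" unfolding i_max_def using c0 by simp
  show "?x \<le> real (i_max \<nu> n)" unfolding e by (rule le_of_int_ceiling)
  show "real (i_max \<nu> n) < ?x + 1" unfolding e using ceiling_correct[of ?x] by linarith
qed

lemma two_powr_R: "0 < real n / \<nu> \<Longrightarrow> 2 powr (kpkvb_R \<nu> n / (2 * ln 2)) = real n / \<nu>"
  unfolding kpkvb_R_def powr_def by simp

lemma ntiles_bounds:
  assumes R: "10 \<le> kpkvb_R \<nu> n" and pos: "0 < real n / \<nu>" and i: "i \<le> i_max \<nu> n"
  shows "1 \<le> 4 - int i + \<lfloor>kpkvb_R \<nu> n / (2 * ln 2)\<rfloor>"
    and "real (n_tiles \<nu> n i) = 2 powr (real_of_int (4 - int i + \<lfloor>kpkvb_R \<nu> n / (2 * ln 2)\<rfloor>))"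
    and "1 \<le> n_tiles \<nu> n i"
    and "real (n_tiles \<nu> n i) \<le> 16 * (real n / \<nu>) / 2 powr real i"
    and "2 * n_tiles \<nu> n (Suc i) = n_tiles \<nu> n i"
proof -
  let ?y = "kpkvb_R \<nu> n / (2 * ln 2)"
  let ?e = "4 - int i + \<lfloor>?y\<rfloor>"
  have L: "0 < ln (2::real)" by simp
  have "real i \<le> real (i_max \<nu> n)" using i by simp
  also have "\<dots> < 0.9 * kpkvb_R \<nu> n / (2 * ln 2) + 1" using imax_bounds(2)[of \<nu> n] R by simp
  finally have ib: "real i < 0.9 * ?y + 1" by simp
  have fy: "?y - 1 < real_of_int \<lfloor>?y\<rfloor>" by linarith
  have y0: "0 \<le> ?y" using R L by simp
  have ee: "real_of_int ?e = 4 - real i + real_of_int \<lfloor>?y\<rfloor>" by simp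
  have "real_of_int ?e > 2" using ib fy y0 ee by linarith
  then show e1: "1 \<le> ?e" by linarith
  have nt: "n_tiles \<nu> n i = 2 ^ nat ?e" unfolding n_tiles_def ..
  show e2: "real (n_tiles \<nu> n i) = 2 powr (real_of_int ?e)"
    unfolding nt using e1 by (simp add: powr_realpow[symmetric])
  show "1 \<le> n_tiles \<nu> n i" unfolding nt by simp
  have "2 powr (real_of_int ?e) \<le> 2 powr (4 - real i + ?y)"
    by (intro powr_mono) auto
  also have "\<dots> = 2 powr 4 * 2 powr ?y / 2 powr real i"
    by (simp add: powr_add powr_diff)
  also have "\<dots> = 16 * (real n / \<nu>) / 2 powr real i"
    using two_powr_R[OF pos] by simp
  finally show "real (n_tiles \<nu> n i) \<le> 16 * (real n / \<nu>) / 2 powr real i" using e2 by simp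
  have "nat ?e = Suc (nat (4 - int (Suc i) + \<lfloor>?y\<rfloor>))" using e1 by simp
  then show "2 * n_tiles \<nu> n (Suc i) = n_tiles \<nu> n i" unfolding n_tiles_def by simp
qed


lemma sub_admissible:
  assumes R: "10 \<le> kpkvb_R \<nu> n" and pos: "0 < real n / \<nu>"
  shows "i \<le> i_max \<nu> n \<Longrightarrow> j < n_tiles \<nu> n i \<Longrightarrow> sub i j \<subseteq> admissible \<nu> n"
proof (induction i arbitrary: j)
  case 0 then show ?case by (simp add: admissible_def)
next
  case (Suc i)
  have "2 * n_tiles \<nu> n (Suc i) = n_tiles \<nu> n i"
    using Suc.prems by (intro ntiles_bounds(5)[OF R pos]) simp
  then have "2 * j + 1 < n_tiles \<nu> n i" using Suc.prems by linarith
  then have "sub i (2*j) \<subseteq> admissible \<nu> n" "sub i (2*j+1) \<subseteq> admissible \<nu> n"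
    using Suc.prems by (intro Suc.IH; simp)+
  then show ?case using Suc.prems by (simp add: admissible_def)
qed

lemma finite_admissible: "finite (admissible \<nu> n)"
proof -
  have "admissible \<nu> n \<subseteq> {..i_max \<nu> n} \<times> {..<n_tiles \<nu> n 0 + Max (n_tiles \<nu> n ` {..i_max \<nu> n})}"
    unfolding admissible_def
  proof (clarsimp)
    fix a b assume "a \<le> i_max \<nu> n" "b < n_tiles \<nu> n a"
    moreover have "n_tiles \<nu> n a \<le> Max (n_tiles \<nu> n ` {..i_max \<nu> n})"
      using \<open>a \<le> i_max \<nu> n\<close> by (intro Max_ge) auto
    ultimately show "b < n_tiles \<nu> n 0 + Max (n_tiles \<nu> n ` {..i_max \<nu> n})" by linarith
  qed
  then show ?thesis by (rule finite_subset) auto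
qed

lemma tile_box:
  assumes R: "10 \<le> kpkvb_R \<nu> n" and pos: "0 < real n / \<nu>" and i: "i \<le> i_max \<nu> n"
    and j: "j < n_tiles \<nu> n i" and a0: "0 \<le> kpkvb_R \<nu> n - 2 * (real i + 1) * ln 2"
  shows "tile \<nu> n i j = {kpkvb_R \<nu> n - 2 * (real i + 1) * ln 2 ..< kpkvb_R \<nu> n - 2 * real i * ln 2}
           \<times> {2 * pi * real j / real (n_tiles \<nu> n i) <.. 2 * pi * (real j + 1) / real (n_tiles \<nu> n i)}"
proof -
  let ?N = "real (n_tiles \<nu> n i)"
  have N1: "1 \<le> ?N" using ntiles_bounds(3)[OF R pos i] by simp
  have "real j + 1 \<le> ?N" using j by linarith
  then have "(real j + 1) / ?N \<le> 1" using N1 by simp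
  then have "2 * pi * ((real j + 1) / ?N) \<le> 2 * pi * 1" by (intro mult_left_mono) auto
  then have t2: "2 * pi * (real j + 1) / ?N \<le> 2 * pi" by simp
  have t1: "0 \<le> 2 * pi * real j / ?N" using N1 by simp
  have iL: "0 \<le> 2 * real i * ln 2" by simp
  show ?thesis
    unfolding tile_def disk_def using a0 t2
    by auto (use iL t1 in linarith)+
qed


lemma sinh_ge: assumes "1 \<le> (x::real)" shows "exp x / 4 \<le> sinh x"
proof -
  have "1 + 2*x \<le> exp (2*x)" by (rule exp_ge_add_one_self)
  then have "2 \<le> exp (2*x)" using assms by linarith
  moreover have "exp (2*x) = exp x * exp x" by (metis exp_add mult_2)
  ultimately have "2 \<le> exp x * exp x" by simp
  then have "2 / exp x \<le> exp x" by (simp add: field_simps)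
  then have "2 * exp (-x) \<le> exp x" by (simp add: exp_minus divide_inverse)
  then show ?thesis by (simp add: sinh_field_def)
qed

lemma cosh_le: assumes "0 \<le> (x::real)" shows "cosh x - 1 \<le> exp x"
proof -
  have "exp (-x) \<le> 1" using assms by simp
  moreover have "1 \<le> exp x" using assms by simp
  ultimately have "exp x + exp (-x) - 2 \<le> 2 * exp x" by linarith
  then show ?thesis unfolding cosh_field_def by (simp add: field_simps)
qed

lemma eq1: fixes n \<alpha> s c L N :: real assumes "0 < c" "0 < N"
  shows "n * \<alpha> * s / (2*pi*c) * (2 * L * (2 * pi / N)) = (n * \<alpha> * 2 * L) * s / (c * N)"
  using assms by (simp add: field_simps)
lemma eq2: fixes n \<alpha> L E X P \<nu> :: real assumes "0 < n" "0 < \<nu>" "0 < X" "0 < P"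
  shows "(n * \<alpha> * 2 * L) * (E / 4) / (X * (16 * (n / \<nu>) / P)) = \<nu> * \<alpha> * L / 32 * (E / X * P)"
  using assms by (simp add: field_simps)
lemma eq3: fixes \<alpha> Rr :: real
  shows "exp (\<alpha>*(Rr - 2 * (real i + 1) * ln 2)) / exp (\<alpha>*Rr) = 2 powr (- 2 * \<alpha> * (real i + 1))"
proof -
  have "exp (\<alpha>*(Rr - 2 * (real i + 1) * ln 2)) / exp (\<alpha>*Rr) = exp (\<alpha>*(Rr - 2 * (real i + 1) * ln 2) - \<alpha>*Rr)"
    by (simp add: exp_diff)
  also have "\<alpha>*(Rr - 2 * (real i + 1) * ln 2) - \<alpha>*Rr = (- 2 * \<alpha> * (real i + 1)) * ln 2"
    by (simp add: algebra_simps)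
  finally show ?thesis by (simp add: powr_def)
qed
lemma eq4: "2 powr (- 2 * \<alpha> * (real i + 1)) * 2 powr real i = 2 powr ((1 - 2*\<alpha>) * real i) * 2 powr (- 2 * (\<alpha>::real))"
proof -
  have "- 2 * \<alpha> * (real i + 1) + real i = (1 - 2*\<alpha>) * real i + (- 2 * \<alpha>)" by (simp add: algebra_simps)
  then show ?thesis by (simp only: powr_add[symmetric])
qed

lemma arith_bound:
  fixes \<alpha> \<nu> n a Rr N :: real and i :: nat
  assumes npos: "0 < n" and nu: "0 < \<nu>" and a0: "0 < \<alpha>" and a1: "\<alpha> < 1/2"
    and aa1: "1 \<le> \<alpha> * a" and adef: "a = Rr - 2 * (real i + 1) * ln 2" and Rpos: "0 < \<alpha> * Rr"
    and N1: "1 \<le> N" and Nb: "N \<le> 16 * (n / \<nu>) / 2 powr real i"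
  shows "\<nu> * \<alpha> * ln 2 / 64 * 2 powr ((1 - 2*\<alpha>) * real i)
      \<le> n * \<alpha> * sinh (\<alpha>*a) / (2*pi*(cosh (\<alpha>*Rr) - 1)) * (2 * ln 2 * (2 * pi / N))"
proof -
  define L where "L = ln (2::real)"
  have L0: "0 < L" unfolding L_def by simp
  have c1: "0 < cosh (\<alpha>*Rr) - 1" using cosh_real_nonneg_less_iff[of 0 "\<alpha>*Rr"] Rpos by simp
  have c2: "cosh (\<alpha>*Rr) - 1 \<le> exp (\<alpha>*Rr)" using Rpos by (intro cosh_le) simp
  have s1: "exp (\<alpha>*a) / 4 \<le> sinh (\<alpha>*a)" using aa1 by (rule sinh_ge)
  have cl_eq: "n * \<alpha> * sinh (\<alpha>*a) / (2*pi*(cosh (\<alpha>*Rr) - 1)) * (2 * L * (2 * pi / N))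
      = (n * \<alpha> * 2 * L) * sinh (\<alpha>*a) / ((cosh (\<alpha>*Rr) - 1) * N)"
    using N1 c1 by (intro eq1) auto
  have "(n * \<alpha> * 2 * L) * (exp (\<alpha>*a) / 4) / (exp (\<alpha>*Rr) * (16 * (n / \<nu>) / 2 powr real i))
      \<le> (n * \<alpha> * 2 * L) * sinh (\<alpha>*a) / ((cosh (\<alpha>*Rr) - 1) * N)"
  proof (rule frac_le)
    show "0 \<le> n * \<alpha> * 2 * L * sinh (\<alpha> * a)" using npos a0 L0 aa1 by simp
    show "n * \<alpha> * 2 * L * (exp (\<alpha> * a) / 4) \<le> n * \<alpha> * 2 * L * sinh (\<alpha> * a)"
      using npos a0 L0 s1 by (intro mult_left_mono) auto
    show "0 < (cosh (\<alpha> * Rr) - 1) * N" using c1 N1 by simp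
    show "(cosh (\<alpha> * Rr) - 1) * N \<le> exp (\<alpha> * Rr) * (16 * (n / \<nu>) / 2 powr real i)"
      using c1 c2 Nb N1 by (intro mult_mono) auto
  qed
  also have "(n * \<alpha> * 2 * L) * (exp (\<alpha>*a) / 4) / (exp (\<alpha>*Rr) * (16 * (n / \<nu>) / 2 powr real i))
      = \<nu> * \<alpha> * L / 32 * (exp (\<alpha>*a) / exp (\<alpha>*Rr) * 2 powr real i)"
    using npos nu by (intro eq2) auto
  also have "exp (\<alpha>*a) / exp (\<alpha>*Rr) = 2 powr (- 2 * \<alpha> * (real i + 1))"
    unfolding adef by (rule eq3)
  also have "2 powr (- 2 * \<alpha> * (real i + 1)) * 2 powr real i = 2 powr ((1 - 2*\<alpha>) * real i) * 2 powr (- 2 * \<alpha>)"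
    by (rule eq4)
  finally have main: "\<nu> * \<alpha> * L / 32 * (2 powr ((1 - 2*\<alpha>) * real i) * 2 powr (- 2 * \<alpha>))
      \<le> (n * \<alpha> * 2 * L) * sinh (\<alpha>*a) / ((cosh (\<alpha>*Rr) - 1) * N)" .
  have "2 powr (-1) \<le> 2 powr (- 2 * \<alpha>)" using a1 by (intro powr_mono) auto
  then have h: "1/2 \<le> 2 powr (- 2 * \<alpha>)" by (simp add: powr_minus)
  have "\<nu> * \<alpha> * L / 64 * 2 powr ((1 - 2*\<alpha>) * real i)
       = \<nu> * \<alpha> * L / 32 * (2 powr ((1 - 2*\<alpha>) * real i) * (1/2))" by simp
  also have "\<dots> \<le> \<nu> * \<alpha> * L / 32 * (2 powr ((1 - 2*\<alpha>) * real i) * 2 powr (- 2 * \<alpha>))"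
    using nu a0 L0 h by (intro mult_left_mono) auto
  finally show ?thesis using main cl_eq unfolding L_def by linarith
qed


lemma mu_bound:
  fixes \<alpha> \<nu> :: real and n i j :: nat
  assumes a0: "0 < \<alpha>" and a1: "\<alpha> < 1/2" and nu: "0 < \<nu>" and pos: "0 < real n / \<nu>"
    and R: "10 / \<alpha> + 40 \<le> kpkvb_R \<nu> n" and adm: "(i, j) \<in> admissible \<nu> n"
  shows "emeasure (intensity \<alpha> \<nu> n) (tile \<nu> n i j) < \<infinity>"
    and "\<nu> * \<alpha> * ln 2 / 64 * 2 powr ((1 - 2*\<alpha>) * real i) \<le> enn2real (emeasure (intensity \<alpha> \<nu> n) (tile \<nu> n i j))"
proof -
  define Rr where "Rr = kpkvb_R \<nu> n"
  define L where "L = ln (2::real)"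
  define a where "a = Rr - 2 * (real i + 1) * L"
  define b where "b = Rr - 2 * real i * L"
  define N where "N = real (n_tiles \<nu> n i)"
  define t1 where "t1 = 2 * pi * real j / N"
  define t2 where "t2 = 2 * pi * (real j + 1) / N"
  have i: "i \<le> i_max \<nu> n" and j: "j < n_tiles \<nu> n i" using adm by (auto simp: admissible_def)
  have L0: "0 < L" and L1: "L < 1" unfolding L_def using ln_2_less_1 by auto
  have al: "20 \<le> 10 / \<alpha>" using a0 a1 by (simp add: field_simps)
  have R10: "10 \<le> Rr" using R al unfolding Rr_def by linarith
  have "real i \<le> real (i_max \<nu> n)" using i by simp
  also have "real (i_max \<nu> n) < 0.9 * Rr / (2 * L) + 1"
    using imax_bounds(2)[of \<nu> n] R10 unfolding Rr_def L_def by simp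
  finally have ib: "real i < 0.9 * Rr / (2 * L) + 1" .
  have "2 * L * real i < 2 * L * (0.9 * Rr / (2 * L) + 1)" using ib L0 by simp
  also have "2 * L * (0.9 * Rr / (2 * L) + 1) = 0.9 * Rr + 2 * L" using L0 by (simp add: field_simps)
  finally have "2 * L * real i < 0.9 * Rr + 2 * L" .
  then have A1: "0.1 * Rr - 4 * L < a" unfolding a_def by (simp add: algebra_simps)
  have A2: "1 / \<alpha> + 4 \<le> 0.1 * Rr" using R unfolding Rr_def by simp
  have aa: "1 / \<alpha> < a" using A1 A2 L1 by linarith
  then have aa1: "1 \<le> \<alpha> * a" using a0 by (simp add: field_simps)
  have "0 < 1 / \<alpha>" using a0 by simp
  then have apos: "0 \<le> a" using aa by linarith
  have N1: "1 \<le> N" unfolding N_def using ntiles_bounds(3)[OF _ pos i] R10 Rr_def by simp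
  have Nb: "N \<le> 16 * (real n / \<nu>) / 2 powr real i"
    unfolding N_def using ntiles_bounds(4)[OF _ pos i] R10 Rr_def by simp
  have "real j + 1 \<le> N" using j unfolding N_def by linarith
  then have "(real j + 1) / N \<le> 1" using N1 by simp
  then have "2 * pi * ((real j + 1) / N) \<le> 2 * pi * 1" by (intro mult_left_mono) auto
  then have t2le: "t2 \<le> 2 * pi" unfolding t2_def by simp
  have t10: "0 \<le> t1" unfolding t1_def using N1 by simp
  have t12: "t1 < t2" unfolding t1_def t2_def using N1 by (simp add: divide_strict_right_mono)
  have ab: "a < b" unfolding a_def b_def using L0 by simp
  have bR: "b \<le> kpkvb_R \<nu> n" unfolding b_def Rr_def using L0 by simp
  have a0': "0 \<le> kpkvb_R \<nu> n - 2 * (real i + 1) * ln 2" using apos unfolding a_def Rr_def L_def .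
  have T: "tile \<nu> n i j = {a..<b} \<times> {t1<..t2}"
    unfolding a_def b_def t1_def t2_def N_def Rr_def L_def
    using R10 unfolding Rr_def by (intro tile_box[OF _ pos i j a0'])
  have area: "(b - a) * (t2 - t1) = 2 * L * (2 * pi / N)"
    unfolding a_def b_def t1_def t2_def using N1 by (simp add: field_simps)
  note lo = intensity_box(1)[OF a0 apos ab bR t10 t12 t2le]
  note up = intensity_box(2)[OF a0 apos ab bR t10 t12 t2le]
  show fin: "emeasure (intensity \<alpha> \<nu> n) (tile \<nu> n i j) < \<infinity>"
    unfolding T using up by (simp add: top.not_eq_extremum le_less_trans)
  define E where "E = emeasure (intensity \<alpha> \<nu> n) (tile \<nu> n i j)"
  have Eeq: "E = ennreal (enn2real E)" using fin unfolding E_def by (simp add: less_top)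
  define cl where "cl = real n * \<alpha> * sinh (\<alpha>*a) / (2*pi*(cosh (\<alpha>*Rr) - 1)) * ((b-a)*(t2-t1))"
  have "ennreal cl \<le> E" using lo unfolding E_def T cl_def Rr_def .
  then have "ennreal cl \<le> ennreal (enn2real E)" using Eeq by simp
  then have clE: "cl \<le> enn2real E" by (simp add: ennreal_le_iff2) (use enn2real_nonneg[of E] in linarith)
  have npos: "0 < real n" using pos nu by (simp add: zero_less_divide_iff)
  have Rpos: "0 < \<alpha> * Rr" using a0 R10 by simp
  have "\<nu> * \<alpha> * ln 2 / 64 * 2 powr ((1 - 2*\<alpha>) * real i) \<le> cl"
    unfolding cl_def area L_def
    by (rule arith_bound[OF npos nu a0 a1 aa1 a_def[unfolded L_def] Rpos N1 Nb])
  then show "\<nu> * \<alpha> * ln 2 / 64 * 2 powr ((1 - 2*\<alpha>) * real i) \<le> enn2real (emeasure (intensity \<alpha> \<nu> n) (tile \<nu> n i j))"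
    using clE unfolding E_def by linarith
qed


lemma asym:
  fixes C c d v :: real assumes "c>0" "d>0" "v>0"
  shows "((\<lambda>n::nat. C * real n * exp (- c * (real n / v) powr d) / real n powr (-1/2)) \<longlongrightarrow> 0) sequentially"
  using assms by real_asymp


lemma pointwise:
  fixes \<alpha> \<nu> :: real and n :: nat
  assumes a0: "0 < \<alpha>" and a1: "\<alpha> < 1/2" and nu: "0 < \<nu>" and pos: "0 < real n / \<nu>"
    and R: "10 / \<alpha> + 40 \<le> kpkvb_R \<nu> n" and K10: "10 \<le> \<nu> * \<alpha> * ln 2 / 64"
  shows "0 \<le> 1 - measure_pmf.prob (tile_counts \<alpha> \<nu> n) (all_top_demands_zero \<nu> n)"
    and "1 - measure_pmf.prob (tile_counts \<alpha> \<nu> n) (all_top_demands_zero \<nu> n)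
         \<le> 64 * exp 2 / \<nu> * real n * exp (- ((1 - exp (-1)) * (\<nu> * \<alpha> * ln 2 / 64)) * (real n / \<nu>) powr (0.9 * (1 - 2*\<alpha>)))"
proof -
  show "0 \<le> 1 - measure_pmf.prob (tile_counts \<alpha> \<nu> n) (all_top_demands_zero \<nu> n)"
    using measure_pmf.prob_le_1 by simp
  define K where "K = \<nu> * \<alpha> * ln 2 / 64"
  define c0 where "c0 = 1 - exp (-1::real)"
  define L where "L = ln (2::real)"
  define Rr where "Rr = kpkvb_R \<nu> n"
  define I where "I = i_max \<nu> n"
  define T where "T = n_tiles \<nu> n I"
  define A where "A = admissible \<nu> n"
  define \<mu> where "\<mu> = (\<lambda>(i, j). enn2real (emeasure (intensity \<alpha> \<nu> n) (tile \<nu> n i j)))"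
  define Mt where "Mt = K * 2 powr ((1 - 2*\<alpha>) * real I)"
  have L0: "0 < L" unfolding L_def by simp
  have al: "20 \<le> 10 / \<alpha>" using a0 a1 by (simp add: field_simps)
  have R10: "10 \<le> Rr" using R al unfolding Rr_def by linarith
  have Ilow: "0.9 * Rr / (2 * L) \<le> real I" using imax_bounds(1)[of \<nu> n] R10 unfolding I_def Rr_def L_def by simp
  have "0 < 0.9 * Rr / (2 * L)" using R10 L0 by simp
  then have "0 < I" using Ilow by linarith
  then obtain m where m: "I = Suc m" using gr0_implies_Suc by blast
  have c0h: "1/2 \<le> c0"
  proof -
    have "2 \<le> exp (1::real)" using exp_ge_add_one_self[of 1] by simp
    then have "exp (-1::real) \<le> 1/2" by (simp add: exp_minus field_simps)
    then show ?thesis unfolding c0_def by simp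
  qed
  have K0: "0 < K" using K10 unfolding K_def by simp
  have mub: "K * 2 powr ((1 - 2*\<alpha>) * real i) \<le> \<mu> (i, j)" if "(i, j) \<in> A" for i j
    using mu_bound(2)[OF a0 a1 nu pos R that[unfolded A_def]] unfolding K_def \<mu>_def by simp
  have TC: "tile_counts \<alpha> \<nu> n = Pi_pmf A 0 (\<lambda>x. pois (\<mu> x))"
    unfolding tile_counts_def A_def \<mu>_def by (simp add: case_prod_beta')
  have AT: "all_top_demands_zero \<nu> n = {N. \<forall>j<T. demand N (Suc m) j = 0}"
    unfolding all_top_demands_zero_def T_def I_def[symmetric] m ..
  have asm: "1 - measure_pmf.prob (Pi_pmf A 0 (\<lambda>x. pois (\<mu> x))) {N. \<forall>j<T. demand N (Suc m) j = 0}
         \<le> real T * (4 * exp 2 * exp (- (1 - exp (-1)) * Mt))"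
  proof (rule assemble)
    show "finite A" unfolding A_def by (rule finite_admissible)
    show "sub (Suc m) j \<subseteq> A" if "j < T" for j
      unfolding A_def using that m R10 pos unfolding T_def I_def Rr_def
      by (intro sub_admissible) (auto simp flip: m)
    show "0 < \<mu> x" if "x \<in> A" for x
    proof -
      obtain i j where x: "x = (i, j)" by (cases x)
      have "0 < K * 2 powr ((1 - 2*\<alpha>) * real i)" using K0 by simp
      then show ?thesis using mub[of i j] that x by simp
    qed
    show "5 \<le> (1 - exp (-1)) * \<mu> x" if "x \<in> A" for x
    proof -
      obtain i j where x: "x = (i, j)" by (cases x)
      have "1 \<le> 2 powr ((1 - 2*\<alpha>) * real i)" using a1 by (intro ge_one_powr_ge_zero) auto
      then have "K \<le> K * 2 powr ((1 - 2*\<alpha>) * real i)" using K0 by simp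
      then have "10 \<le> \<mu> x" using mub[of i j] that x K10 unfolding K_def by simp
      then have "1/2 * 10 \<le> c0 * \<mu> x" using c0h by (intro mult_mono) auto
      then show ?thesis unfolding c0_def by simp
    qed
    show "Mt \<le> \<mu> (Suc m, j)" if "j < T" for j
    proof -
      have "(Suc m, j) \<in> A" using that unfolding A_def admissible_def T_def m[symmetric] I_def by simp
      then have "K * 2 powr ((1 - 2*\<alpha>) * real (Suc m)) \<le> \<mu> (Suc m, j)" by (rule mub)
      then show ?thesis unfolding Mt_def m .
    qed
  qed
  have T1: "real T \<le> 16 * (real n / \<nu>)"
  proof -
    have "real T \<le> 16 * (real n / \<nu>) / 2 powr real I"
      unfolding T_def using ntiles_bounds(4)[OF _ pos] R10 unfolding Rr_def I_def by simp
    also have "\<dots> \<le> 16 * (real n / \<nu>) / 1"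
    proof (rule divide_left_mono)
      show "1 \<le> 2 powr real I" by (rule ge_one_powr_ge_zero) auto
    qed (use pos in auto)
    also have "\<dots> = 16 * (real n / \<nu>)" by simp
    finally show ?thesis .
  qed
  have Mt1: "K * (real n / \<nu>) powr (0.9 * (1 - 2*\<alpha>)) \<le> Mt"
  proof -
    have "(1 - 2*\<alpha>) * (0.9 * Rr / (2 * L)) \<le> (1 - 2*\<alpha>) * real I"
      using Ilow a1 by (intro mult_left_mono) auto
    then have p1: "2 powr ((1 - 2*\<alpha>) * (0.9 * Rr / (2 * L))) \<le> 2 powr ((1 - 2*\<alpha>) * real I)"
      by (intro powr_mono) auto
    have p2: "2 powr ((1 - 2*\<alpha>) * (0.9 * Rr / (2 * L))) = (2 powr (Rr / (2 * L))) powr (0.9 * (1 - 2*\<alpha>))"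
    proof -
      have ex: "(1 - 2*\<alpha>) * (0.9 * Rr / (2 * L)) = Rr / (2*L) * (0.9 * (1 - 2*\<alpha>))"
        using L0 by (simp add: field_simps)
      show ?thesis unfolding powr_powr ex by (rule refl)
    qed
    have p3: "2 powr (Rr / (2 * L)) = real n / \<nu>" unfolding Rr_def L_def by (rule two_powr_R[OF pos])
    have q: "2 powr ((1 - 2*\<alpha>) * (0.9 * Rr / (2 * L))) = (real n / \<nu>) powr (0.9 * (1 - 2*\<alpha>))"
      using p2 p3 by simp
    have P: "(real n / \<nu>) powr (0.9 * (1 - 2*\<alpha>)) \<le> 2 powr ((1 - 2*\<alpha>) * real I)"
      using p1 unfolding q .
    show ?thesis unfolding Mt_def using P K0 by (intro mult_left_mono) auto
  qed
  have e1: "exp (- (1 - exp (-1)) * Mt) \<le> exp (- (c0 * K) * (real n / \<nu>) powr (0.9 * (1 - 2*\<alpha>)))"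
  proof -
    have "c0 * (K * (real n / \<nu>) powr (0.9 * (1 - 2*\<alpha>))) \<le> c0 * Mt"
      using Mt1 c0h by (intro mult_left_mono) auto
    then have "- c0 * Mt \<le> - (c0 * K) * (real n / \<nu>) powr (0.9 * (1 - 2*\<alpha>))"
      by (simp add: mult.assoc)
    then show ?thesis unfolding c0_def[symmetric] by simp
  qed
  have "1 - measure_pmf.prob (tile_counts \<alpha> \<nu> n) (all_top_demands_zero \<nu> n)
     \<le> real T * (4 * exp 2 * exp (- (1 - exp (-1)) * Mt))" using asm unfolding TC AT .
  also have "\<dots> \<le> (16 * (real n / \<nu>)) * (4 * exp 2 * exp (- (c0 * K) * (real n / \<nu>) powr (0.9 * (1 - 2*\<alpha>))))"
    using T1 e1 by (intro mult_mono) auto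
  also have "\<dots> = 64 * exp 2 / \<nu> * real n * exp (- ((1 - exp (-1)) * (\<nu> * \<alpha> * ln 2 / 64)) * (real n / \<nu>) powr (0.9 * (1 - 2*\<alpha>)))"
    unfolding c0_def K_def by (simp add: field_simps)
  finally show "1 - measure_pmf.prob (tile_counts \<alpha> \<nu> n) (all_top_demands_zero \<nu> n)
         \<le> 64 * exp 2 / \<nu> * real n * exp (- ((1 - exp (-1)) * (\<nu> * \<alpha> * ln 2 / 64)) * (real n / \<nu>) powr (0.9 * (1 - 2*\<alpha>)))" .
qed



theorem mainTheorem13:
  fixes \<alpha> :: real
  assumes "0 < \<alpha>" and "\<alpha> < 1 / 2"
  shows "\<exists>\<nu>0. \<forall>\<nu> \<ge> \<nu>0. 0 < \<nu> \<longrightarrow>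
           (\<lambda>n::nat. 1 - measure_pmf.prob (tile_counts \<alpha> \<nu> n) (all_top_demands_zero \<nu> n))
             \<in> o(\<lambda>n. real n powr (-1/2))"
proof (intro exI allI impI)
  fix \<nu> :: real
  assume nu0: "1000 / \<alpha> \<le> \<nu>" and nu: "0 < \<nu>"
  define f where "f = (\<lambda>n::nat. 1 - measure_pmf.prob (tile_counts \<alpha> \<nu> n) (all_top_demands_zero \<nu> n))"
  define c where "c = (1 - exp (-1)) * (\<nu> * \<alpha> * ln 2 / 64)"
  define d where "d = 0.9 * (1 - 2*\<alpha>)"
  define g where "g = (\<lambda>n::nat. 64 * exp 2 / \<nu> * real n * exp (- c * (real n / \<nu>) powr d))"
  define R0 where "R0 = 10 / \<alpha> + 40"
  have na: "1000 \<le> \<nu> * \<alpha>" using nu0 assms(1) by (simp add: field_simps)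
  have K10: "10 \<le> \<nu> * \<alpha> * ln 2 / 64"
  proof -
    have "1000 * (2/3) \<le> \<nu> * \<alpha> * ln 2" using na ln2_ge_two_thirds by (intro mult_mono) auto
    then show ?thesis by simp
  qed
  have c0: "0 < c" unfolding c_def using K10 by simp
  have d0: "0 < d" unfolding d_def using assms by simp
  have ev: "eventually (\<lambda>n. 0 < real n / \<nu> \<and> R0 \<le> kpkvb_R \<nu> n) sequentially"
  proof -
    have "eventually (\<lambda>n. nat \<lceil>\<nu> * exp (R0/2)\<rceil> + 1 \<le> n) sequentially" by (rule eventually_ge_at_top)
    then show ?thesis
    proof (rule eventually_mono)
      fix n assume n: "nat \<lceil>\<nu> * exp (R0/2)\<rceil> + 1 \<le> n"
      have "\<nu> * exp (R0/2) \<le> real n" using n by linarith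
      then have e: "exp (R0/2) \<le> real n / \<nu>" using nu by (simp add: field_simps)
      then have p: "0 < real n / \<nu>" by (smt (verit) exp_gt_zero)
      have "R0/2 \<le> ln (real n / \<nu>)" using e p by (metis exp_gt_zero ln_exp ln_le_cancel_iff)
      then show "0 < real n / \<nu> \<and> R0 \<le> kpkvb_R \<nu> n" using p unfolding kpkvb_R_def by simp
    qed
  qed
  have fg: "eventually (\<lambda>n. norm (f n) \<le> 1 * norm (g n)) sequentially"
    using ev
  proof (rule eventually_mono)
    fix n assume "0 < real n / \<nu> \<and> R0 \<le> kpkvb_R \<nu> n"
    then have p: "0 < real n / \<nu>" and R: "10 / \<alpha> + 40 \<le> kpkvb_R \<nu> n" unfolding R0_def by auto
    note pw = pointwise[OF assms(1) assms(2) nu p R K10]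
    have "0 \<le> f n" "f n \<le> g n" using pw unfolding f_def g_def c_def d_def by simp_all
    then show "norm (f n) \<le> 1 * norm (g n)" by simp
  qed
  have "f \<in> O(g)" using fg by (rule bigoI)
  moreover have "g \<in> o(\<lambda>n. real n powr (-1/2))"
  proof (rule smalloI_tendsto)
    show "((\<lambda>n. g n / real n powr (-1/2)) \<longlongrightarrow> 0) sequentially"
      unfolding g_def by (rule asym[OF c0 d0 nu, of "64 * exp 2 / \<nu>"])
    show "eventually (\<lambda>n. real n powr (-1/2) \<noteq> 0) sequentially"
      using eventually_gt_at_top[of 0] by eventually_elim simp
  qed
  ultimately show "f \<in> o(\<lambda>n. real n powr (-1/2))" by (rule landau_o.big_small_trans)
qed


end
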